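(* Let $X$ be a compact metric space and $f\colon X\to X$ continuous. If $(X,f)$ has the shadowing property, then it has $\gamma$-restricted two-sided cofinal orbital shadowing.
   Context: Shadowing: for every $\epsilon>0$ there is $\delta>0$ such that for every sequence $\langle x_i\rangle_{i\ge0}$ with $d(f(x_i),x_{i+1})<\delta$ for all $i$ there is $z\in X$ with $d(f^i(z),x_i)<\epsilon$ for all $i\ge0$. $d_H$ is the Hausdorff metric. A full trajectory is $\langle z_i\rangle_{i\in\mathbb Z}$ with $f(z_i)=z_{i+1}$. For two-sided sequences, $\omega(\langle x_i\rangle)=\bigcap_{M}\overline{\{x_n:n>M\}}$, $\alpha(\langle x_i\rangle)=\bigcap_{M}\overline{\{x_n:n<-M\}}$. A two-sided $\delta$-pseudo-orbit is $\langle x_i\rangle_{i\in\mathbb Z}$ with $d(f(x_i),x_{i+1})<\delta$ for all $i$. $\gamma$-restricted two-sided cofinal orbital shadowing: for every $\epsilon>0$ there is $\delta>0$ such that for every two-sided $\delta$-pseudo-orbit $\langle x_i\rangle$ with $d_H(\alpha(\langle x_i\rangle),\omega(\langle x_i\rangle))<\epsilon$ there is a full trajectory $\langle z_i\rangle$ such that for every $K\in\mathbb N$ there is $N\ge K$ with $d_H(\overline{\{z_{N+i}\}_{i\ge0}},\overline{\{x_{N+i}\}_{i\ge0}})<\epsilon$ and $d_H(\overline{\{z_{i-N}\}_{i\le0}},\overline{\{x_{i-N}\}_{i\le0}})<\epsilon$. *)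

theory Defs
  imports "HOL-Analysis.Analysis"
begin

definition hausdorff_dist :: "'a::metric_space set \<Rightarrow> 'a set \<Rightarrow> real" where
  "hausdorff_dist A B = max (SUP a\<in>A. infdist a B) (SUP b\<in>B. infdist b A)"

definition shadowing :: "'a::metric_space set \<Rightarrow> ('a \<Rightarrow> 'a) \<Rightarrow> bool" where
  "shadowing X f \<longleftrightarrow>
     (\<forall>\<epsilon>>0. \<exists>\<delta>>0. \<forall>x::nat \<Rightarrow> 'a.
        (\<forall>i. x i \<in> X) \<and> (\<forall>i. dist (f (x i)) (x (Suc i)) < \<delta>) \<longrightarrow>
        (\<exists>z\<in>X. \<forall>i. dist ((f ^^ i) z) (x i) < \<epsilon>))"

definition two_sided_pseudo_orbit :: "'a::metric_space set \<Rightarrow> ('a \<Rightarrow> 'a) \<Rightarrow> real \<Rightarrow> (int \<Rightarrow> 'a) \<Rightarrow> bool" where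
  "two_sided_pseudo_orbit X f \<delta> x \<longleftrightarrow>
     (\<forall>i. x i \<in> X) \<and> (\<forall>i. dist (f (x i)) (x (i + 1)) < \<delta>)"

definition full_trajectory :: "'a set \<Rightarrow> ('a \<Rightarrow> 'a) \<Rightarrow> (int \<Rightarrow> 'a) \<Rightarrow> bool" where
  "full_trajectory X f z \<longleftrightarrow> (\<forall>i. z i \<in> X) \<and> (\<forall>i. f (z i) = z (i + 1))"

definition omega_seq :: "(int \<Rightarrow> 'a::topological_space) \<Rightarrow> 'a set" where
  "omega_seq x = (\<Inter>M::nat. closure {x n | n. n > int M})"

definition alpha_seq :: "(int \<Rightarrow> 'a::topological_space) \<Rightarrow> 'a set" where
  "alpha_seq x = (\<Inter>M::nat. closure {x n | n. n < - int M})"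

definition gamma_restricted_two_sided_cofinal_orbital_shadowing ::
  "'a::metric_space set \<Rightarrow> ('a \<Rightarrow> 'a) \<Rightarrow> bool" where
  "gamma_restricted_two_sided_cofinal_orbital_shadowing X f \<longleftrightarrow>
     (\<forall>\<epsilon>>0. \<exists>\<delta>>0. \<forall>x::int \<Rightarrow> 'a.
        two_sided_pseudo_orbit X f \<delta> x \<and>
        hausdorff_dist (alpha_seq x) (omega_seq x) < \<epsilon> \<longrightarrow>
        (\<exists>z. full_trajectory X f z \<and>
           (\<forall>K::nat. \<exists>N\<ge>K.
              hausdorff_dist (closure {z (int N + i) | i. i \<ge> 0})
                             (closure {x (int N + i) | i. i \<ge> 0}) < \<epsilon> \<and>
              hausdorff_dist (closure {z (i - int N) | i. i \<le> 0})
                             (closure {x (i - int N) | i. i \<le> 0}) < \<epsilon>)))"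

end

theory Submission
  imports Defs
begin

lemma hd_closure_le:
  fixes A B :: "'a::metric_space set"
  assumes "A \<noteq> {}" "B \<noteq> {}"
    and AB: "\<forall>a\<in>A. \<exists>b\<in>B. dist a b \<le> c" and BA: "\<forall>b\<in>B. \<exists>a\<in>A. dist b a \<le> c"
  shows "hausdorff_dist (closure A) (closure B) \<le> c"
proof -
  have gen: "(SUP a\<in>closure P. infdist a (closure Q)) \<le> c"
    if ne: "P \<noteq> {}" and neQ: "Q \<noteq> {}" and PQ: "\<forall>a\<in>P. \<exists>b\<in>Q. dist a b \<le> c" for P Q :: "'a set"
  proof (rule cSUP_least)
    show "closure P \<noteq> {}" using ne by simp
  next
    fix a assume a: "a \<in> closure P"
    have cl: "closed {a. infdist a Q \<le> c}"
      by (intro closed_Collect_le continuous_intros continuous_on_infdist)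
    have "P \<subseteq> {a. infdist a Q \<le> c}"
    proof
      fix p assume "p \<in> P"
      then obtain b where "b \<in> Q" "dist p b \<le> c" using PQ by blast
      then show "p \<in> {a. infdist a Q \<le> c}" using infdist_le[of b Q p] by auto
    qed
    then have "closure P \<subseteq> {a. infdist a Q \<le> c}" using cl closure_minimal by blast
    moreover have "infdist a (closure Q) \<le> infdist a Q"
      by (rule infdist_mono[OF closure_subset neQ])
    ultimately show "infdist a (closure Q) \<le> c" using a by auto
  qed
  show ?thesis unfolding hausdorff_dist_def
    using gen[OF assms(1) assms(2) AB] gen[OF assms(2) assms(1) BA] by simp
qed

lemma funpow_in:
  assumes "f ` X \<subseteq> X" "z \<in> X" shows "(f ^^ i) z \<in> X"
  using assms by (induction i) auto

theorem mainTheorem6: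
  fixes X :: "'a::metric_space set" and f :: "'a \<Rightarrow> 'a"
  assumes "compact X" and "continuous_on X f" and "f ` X \<subseteq> X"
    and "shadowing X f"
  shows "gamma_restricted_two_sided_cofinal_orbital_shadowing X f"
  unfolding gamma_restricted_two_sided_cofinal_orbital_shadowing_def
proof (intro allI impI)
  fix \<epsilon> :: real assume "\<epsilon> > 0"
  then have "\<epsilon>/4 > 0" by simp
  then obtain \<delta> where "\<delta> > 0" and sh: "\<And>y::nat \<Rightarrow> 'a.
        (\<forall>i. y i \<in> X) \<and> (\<forall>i. dist (f (y i)) (y (Suc i)) < \<delta>) \<Longrightarrow>
        (\<exists>z\<in>X. \<forall>i. dist ((f ^^ i) z) (y i) < \<epsilon>/4)"
    using assms(4) unfolding shadowing_def by metis
  show "\<exists>\<delta>>0. \<forall>x::int \<Rightarrow> 'a.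
        two_sided_pseudo_orbit X f \<delta> x \<and>
        hausdorff_dist (alpha_seq x) (omega_seq x) < \<epsilon> \<longrightarrow>
        (\<exists>z. full_trajectory X f z \<and>
           (\<forall>K::nat. \<exists>N\<ge>K.
              hausdorff_dist (closure {z (int N + i) | i. i \<ge> 0})
                             (closure {x (int N + i) | i. i \<ge> 0}) < \<epsilon> \<and>
              hausdorff_dist (closure {z (i - int N) | i. i \<le> 0})
                             (closure {x (i - int N) | i. i \<le> 0}) < \<epsilon>))"
  proof (intro exI[of _ \<delta>] conjI allI impI \<open>\<delta> > 0\<close>, elim conjE)
    fix x :: "int \<Rightarrow> 'a"
    assume po: "two_sided_pseudo_orbit X f \<delta> x"
    then have xX: "\<And>i. x i \<in> X" and xd: "\<And>i. dist (f (x i)) (x (i + 1)) < \<delta>"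
      unfolding two_sided_pseudo_orbit_def by auto
    have "\<forall>n::nat. \<exists>z\<in>X. \<forall>i. dist ((f ^^ i) z) (x (int i - int n)) < \<epsilon>/4"
    proof
      fix n :: nat
      show "\<exists>z\<in>X. \<forall>i. dist ((f ^^ i) z) (x (int i - int n)) < \<epsilon>/4"
      proof (rule sh, intro conjI allI)
        fix i show "x (int i - int n) \<in> X" by (rule xX)
        show "dist (f (x (int i - int n))) (x (int (Suc i) - int n)) < \<delta>"
          using xd[of "int i - int n"] by (simp add: algebra_simps)
      qed
    qed
    then obtain z where zX: "\<And>n. z n \<in> X"
      and zd: "\<And>n i. dist ((f ^^ i) (z n)) (x (int i - int n)) < \<epsilon>/4"
      by metis
    define t where "t n j = (if j + int n \<ge> 0 then (f ^^ nat (j + int n)) (z n) else z n)"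
      for n :: nat and j :: int
    have tX: "t n \<in> PiE UNIV (\<lambda>_. X)" for n
      using funpow_in[OF assms(3) zX] zX by (auto simp: t_def)
    have "compactin (product_topology (\<lambda>_. euclidean) UNIV) (PiE UNIV (\<lambda>_::int. X))"
      using assms(1) by (simp add: compactin_PiE compactin_euclidean_iff)
    then have "compact (PiE UNIV (\<lambda>_::int. X))"
      by (simp add: euclidean_product_topology compactin_euclidean_iff)
    then have "seq_compact (PiE UNIV (\<lambda>_::int. X))" by (rule compact_imp_seq_compact)
    then obtain w r where wS: "w \<in> PiE UNIV (\<lambda>_::int. X)" and r: "strict_mono r"
      and lim: "(t \<circ> r) \<longlonglongrightarrow> w"
      using tX unfolding seq_compact_def by metis
    have wX: "\<And>j. w j \<in> X" using wS by auto
    have limj: "(\<lambda>n. t (r n) j) \<longlonglongrightarrow> w j" for j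
    proof -
      have "isCont (\<lambda>g::int \<Rightarrow> 'a. g j) w"
        using continuous_on_product_coordinates[of j] continuous_on_eq_continuous_at by blast
      from isCont_tendsto_compose[OF this lim] show ?thesis by (simp add: o_def)
    qed
    have ev: "eventually (\<lambda>n. j + int (r n) \<ge> 0) sequentially" for j
    proof -
      have "eventually (\<lambda>n. nat (-j) \<le> r n) sequentially"
        using filterlim_subseq[OF r] unfolding filterlim_at_top by blast
      then show ?thesis by eventually_elim auto
    qed
    have traj: "f (w j) = w (j + 1)" for j
    proof -
      have "(\<lambda>n. f (t (r n) j)) \<longlonglongrightarrow> f (w j)"
        using continuous_on_tendsto_compose[OF assms(2) limj wX] tX by (auto simp: PiE_iff)
      moreover have "eventually (\<lambda>n. f (t (r n) j) = t (r n) (j + 1)) sequentially"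
        using ev[of j]
      proof eventually_elim
        case (elim n)
        have "nat (j + 1 + int (r n)) = Suc (nat (j + int (r n)))" using elim by simp
        then show ?case using elim by (simp add: t_def)
      qed
      ultimately have "(\<lambda>n. t (r n) (j + 1)) \<longlonglongrightarrow> f (w j)"
        using Lim_transform_eventually by fastforce
      then show ?thesis using limj[of "j+1"] LIMSEQ_unique by blast
    qed
    have close: "dist (w j) (x j) \<le> \<epsilon>/4" for j
    proof -
      have "(\<lambda>n. dist (t (r n) j) (x j)) \<longlonglongrightarrow> dist (w j) (x j)"
        by (intro tendsto_intros limj)
      moreover have "eventually (\<lambda>n. dist (t (r n) j) (x j) \<le> \<epsilon>/4) sequentially"
        using ev[of j]
      proof eventually_elim
        case (elim n)
        then show ?case using zd[of "nat (j + int (r n))" "r n"] by (simp add: t_def)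
      qed
      ultimately show ?thesis by (rule tendsto_upperbound) simp
    qed
    have close': "dist (x j) (w j) \<le> \<epsilon>/4" for j using close[of j] by (simp add: dist_commute)
    show "\<exists>z. full_trajectory X f z \<and>
           (\<forall>K::nat. \<exists>N\<ge>K.
              hausdorff_dist (closure {z (int N + i) | i. i \<ge> 0})
                             (closure {x (int N + i) | i. i \<ge> 0}) < \<epsilon> \<and>
              hausdorff_dist (closure {z (i - int N) | i. i \<le> 0})
                             (closure {x (i - int N) | i. i \<le> 0}) < \<epsilon>)"
    proof (intro exI[of _ w] conjI allI)
      show "full_trajectory X f w" unfolding full_trajectory_def using wX traj by auto
    next
      fix K :: nat
      have h1: "hausdorff_dist (closure {w (int K + i) | i. i \<ge> 0})
                             (closure {x (int K + i) | i. i \<ge> 0}) \<le> \<epsilon>/4"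
        using close close' by (intro hd_closure_le) blast+
      have h2: "hausdorff_dist (closure {w (i - int K) | i. i \<le> 0})
                             (closure {x (i - int K) | i. i \<le> 0}) \<le> \<epsilon>/4"
        using close close' by (intro hd_closure_le) blast+
      show "\<exists>N\<ge>K.
              hausdorff_dist (closure {w (int N + i) | i. i \<ge> 0})
                             (closure {x (int N + i) | i. i \<ge> 0}) < \<epsilon> \<and>
              hausdorff_dist (closure {w (i - int N) | i. i \<le> 0})
                             (closure {x (i - int N) | i. i \<le> 0}) < \<epsilon>"
        using h1 h2 \<open>\<epsilon> > 0\<close> by (intro exI[of _ K]) auto
    qed
  qed
qed

end
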